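(* Let $x^\star\in(0,1]$ and $F_f(y;x^\star)=\frac{ye^{(x^\star-2)y}+ye^{-x^\star y}}{2(1-e^{-2y})}$ for $y>0$. Then $F_f(\cdot;x^\star)$ is strictly decreasing on $(1/x^\star,\infty)$. *)

theory Defs
  imports Complex_Main
begin

definition F_f :: "real \<Rightarrow> real \<Rightarrow> real" where
  "F_f xs y = (y * exp ((xs - 2) * y) + y * exp (- xs * y)) / (2 * (1 - exp (-2 * y)))"

end

theory Submission
  imports Defs
begin

lemma F_eq:
  fixes a y :: real
  assumes "0 < y"
  shows "F_f a y = y*(exp((1-a)*y)+exp(-((1-a)*y))) / (2*(exp y - exp (-y)))"
proof -
  have e1: "exp ((a - 2) * y) * exp y = exp (-((1-a)*y))"
    unfolding mult_exp_exp by (simp add: algebra_simps)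
  have e2: "exp (- a * y) * exp y = exp ((1-a)*y)"
    unfolding mult_exp_exp by (simp add: algebra_simps)
  have e3: "(1 - exp (-2 * y)) * exp y = exp y - exp (-y)"
  proof -
    have "exp (-2*y) * exp y = exp (-y)" unfolding mult_exp_exp by simp
    thus ?thesis by (simp add: algebra_simps)
  qed
  have pos: "exp (-2*y) < 1" using assms by simp
  have "F_f a y = ((y * exp ((a - 2) * y) + y * exp (- a * y)) * exp y) / ((2 * (1 - exp (-2 * y))) * exp y)"
    unfolding F_f_def by simp
  also have "\<dots> = y*(exp((1-a)*y)+exp(-((1-a)*y))) / (2*(exp y - exp (-y)))"
    using e1 e2 e3 by (simp add: algebra_simps)
  finally show ?thesis .
qed

lemma key_ineq:
  fixes b y :: real
  assumes b0: "0 \<le> b" and b1: "b < 1" and yb: "1 < y * (1 - b)"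
  defines "P \<equiv> exp (b*y) + exp (-(b*y))" and "Q \<equiv> exp (b*y) - exp (-(b*y))"
      and "s \<equiv> exp y - exp (-y)" and "c \<equiv> exp y + exp (-y)"
  shows "(P + b*y*Q) * (2*s) - y*P*(2*c) < 0"
proof -
  have y0: "0 < y" using yb b1 by (smt (verit) mult_nonpos_nonneg)
  have P0: "0 < P" unfolding P_def by (simp add: add_pos_pos)
  have Q0: "0 \<le> Q" unfolding Q_def using b0 y0 by simp
  have QP: "Q \<le> P" unfolding Q_def P_def by simp
  have s0: "0 < s" unfolding s_def using y0 by simp
  have sc: "s < c" unfolding s_def c_def by simp
  have by0: "0 \<le> b*y" using b0 y0 by simp
  have "b*y*Q \<le> b*y*P" by (rule mult_left_mono[OF QP by0])
  hence "(P + b*y*Q) * s \<le> (P + b*y*P) * s" using s0 by simp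
  also have "\<dots> = P * (1 + b*y) * s" by (simp add: algebra_simps)
  also have "\<dots> \<le> P * y * s"
  proof -
    have "1 + b*y \<le> y" using yb by (simp add: algebra_simps)
    hence "P * (1 + b*y) \<le> P * y" using P0 by simp
    thus ?thesis using s0 by (simp add: mult_right_mono)
  qed
  also have "\<dots> < P * y * c" using P0 y0 sc by simp
  finally show ?thesis by (simp add: algebra_simps)
qed

theorem mainTheorem9:
  fixes xs :: real
  assumes "0 < xs" and "xs \<le> 1"
  shows "strict_antimono_on {1 / xs<..} (F_f xs)"
proof (rule monotone_onI)
  define b where "b = 1 - xs"
  define G where "G = (\<lambda>y. y*(exp(b*y)+exp(-(b*y))) / (2*(exp y - exp (-y))))"
  have b0: "0 \<le> b" and b1: "b < 1" using assms by (auto simp: b_def)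
  fix u v assume u: "u \<in> {1 / xs<..}" and v: "v \<in> {1 / xs<..}" and uv: "u < v"
  have big: "1 < y * (1 - b)" if "1/xs < y" for y
    using that assms by (simp add: b_def field_simps)
  have pos: "0 < y" if "1/xs < y" for y
    using that assms by (smt (verit) divide_pos_pos)
  have "G v < G u"
  proof (rule DERIV_neg_imp_decreasing[OF uv])
    fix x assume "u \<le> x" "x \<le> v"
    hence x: "1/xs < x" using u by simp
    have x0: "0 < x" using pos[OF x] .
    let ?P = "exp (b*x) + exp (-(b*x))" and ?Q = "exp (b*x) - exp (-(b*x))"
      and ?s = "exp x - exp (-x)" and ?c = "exp x + exp (-x)"
    have dN: "((\<lambda>y. y*(exp(b*y)+exp(-(b*y)))) has_real_derivative (?P + b*x*?Q)) (at x)"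
      by (rule derivative_eq_intros refl | simp)+ (simp add: algebra_simps)
    have dD: "((\<lambda>y. 2*(exp y - exp (-y))) has_real_derivative (2*?c)) (at x)"
      by (rule derivative_eq_intros refl | simp)+
    have s0: "2*?s \<noteq> 0" using x0 by simp
    have "(G has_real_derivative ((?P + b*x*?Q) * (2*?s) - x*?P*(2*?c)) / ((2*?s)*(2*?s))) (at x)"
      unfolding G_def using DERIV_divide[OF dN dD s0] by simp
    moreover have "((?P + b*x*?Q) * (2*?s) - x*?P*(2*?c)) / ((2*?s)*(2*?s)) < 0"
    proof (rule divide_neg_pos)
      show "(?P + b*x*?Q) * (2*?s) - x*?P*(2*?c) < 0"
        using key_ineq[OF b0 b1 big[OF x]] by simp
      show "0 < (2*?s)*(2*?s)" using s0 by (simp only: zero_less_mult_iff) (auto simp: x0)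
    qed
    ultimately show "\<exists>y. (G has_real_derivative y) (at x) \<and> y < 0" by blast
  qed
  moreover have "F_f xs u = G u" "F_f xs v = G v"
    using F_eq pos u v by (auto simp: G_def b_def)
  ultimately show "F_f xs v < F_f xs u" by simp
qed

end
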